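(* Let $k\geq 2$ and let $T_0,T_1,\dots,T_{k-1}$ be subtrees of a rooted arc-weighted tree $T$, with $T_k:=T_0$, such that $T_i$ does not overshadow $T_{i+1}$ for every $i=0,\dots,k-1$. Then the collection $\{T_1,\dots,T_k\}$ is not compatible, i.e., there are two trees in it neither of which overshadows the other.
   Context: $T$ is a rooted tree whose arcs carry positive integer weights; the depth of a node is the sum of arc weights on its path to the root. A subtree is a connected node set of $T$. For subtrees $T_1,T_2$, $T_1$ overshadows $T_2$ if every node of $T_2\setminus T_1$ has depth strictly greater than every node of $T_2\cap T_1$. Two subtrees are compatible if one overshadows the other; a collection is compatible if every two of its members are compatible. *)

theory Defs
  imports Main
begin

text \<open>The arc from a
  non-root node v to its parent par v carries the weight w v.\<close>

definition rooted_tree :: "'a set \<Rightarrow> 'a \<Rightarrow> ('a \<Rightarrow> 'a) \<Rightarrow> bool" where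
  "rooted_tree V r par \<longleftrightarrow> r \<in> V \<and> (\<forall>v\<in>V - {r}. par v \<in> V)
     \<and> (\<forall>v\<in>V. \<exists>n. (par ^^ n) v = r)"

definition positive_weights :: "'a set \<Rightarrow> 'a \<Rightarrow> ('a \<Rightarrow> nat) \<Rightarrow> bool" where
  "positive_weights V r w \<longleftrightarrow> (\<forall>v\<in>V - {r}. w v > 0)"

definition height :: "'a \<Rightarrow> ('a \<Rightarrow> 'a) \<Rightarrow> 'a \<Rightarrow> nat" where
  "height r par v = (LEAST n. (par ^^ n) v = r)"

definition depth :: "'a \<Rightarrow> ('a \<Rightarrow> 'a) \<Rightarrow> ('a \<Rightarrow> nat) \<Rightarrow> 'a \<Rightarrow> nat" where
  "depth r par w v = (\<Sum>i<height r par v. w ((par ^^ i) v))"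

definition adj_in :: "'a \<Rightarrow> ('a \<Rightarrow> 'a) \<Rightarrow> 'a set \<Rightarrow> 'a \<Rightarrow> 'a \<Rightarrow> bool" where
  "adj_in r par S x y \<longleftrightarrow> x \<in> S \<and> y \<in> S \<and> ((x \<noteq> r \<and> par x = y) \<or> (y \<noteq> r \<and> par y = x))"

definition subtree :: "'a set \<Rightarrow> 'a \<Rightarrow> ('a \<Rightarrow> 'a) \<Rightarrow> 'a set \<Rightarrow> bool" where
  "subtree V r par S \<longleftrightarrow> S \<subseteq> V \<and> S \<noteq> {} \<and>
     (\<forall>x\<in>S. \<forall>y\<in>S. (adj_in r par S)\<^sup>*\<^sup>* x y)"

definition overshadows :: "'a \<Rightarrow> ('a \<Rightarrow> 'a) \<Rightarrow> ('a \<Rightarrow> nat) \<Rightarrow> 'a set \<Rightarrow> 'a set \<Rightarrow> bool" where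
  "overshadows r par w T1 T2 \<longleftrightarrow>
     (\<forall>x\<in>T2 - T1. \<forall>y\<in>T2 \<inter> T1. depth r par w y < depth r par w x)"

definition compatible :: "'a \<Rightarrow> ('a \<Rightarrow> 'a) \<Rightarrow> ('a \<Rightarrow> nat) \<Rightarrow> 'a set set \<Rightarrow> bool" where
  "compatible r par w C \<longleftrightarrow>
     (\<forall>A\<in>C. \<forall>B\<in>C. overshadows r par w A B \<or> overshadows r par w B A)"

end

theory Submission
  imports Defs
begin

lemma chain_mod:
  fixes S :: "nat \<Rightarrow> 'b set"
  assumes "\<forall>i<k. S i \<subseteq> S ((i + 1) mod k)" and "j < k"
  shows "S j \<subseteq> S ((j + n) mod k)"
proof (induction n)
  case 0 then show ?case using assms(2) by simp
next
  case (Suc n)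
  have "(j + n) mod k < k" using assms(2) by simp
  then have "S ((j + n) mod k) \<subseteq> S (((j + n) mod k + 1) mod k)" using assms(1) by blast
  also have "((j + n) mod k + 1) mod k = (j + Suc n) mod k" by (simp add: mod_Suc_eq)
  finally show ?case using Suc by blast
qed

theorem lemma3:
  fixes V :: "'a set" and r :: 'a and par :: "'a \<Rightarrow> 'a" and w :: "'a \<Rightarrow> nat"
    and k :: nat and T :: "nat \<Rightarrow> 'a set"
  assumes "rooted_tree V r par"
    and "positive_weights V r w"
    and "k \<ge> 2"
    and "\<forall>i<k. subtree V r par (T i)"
    and "\<forall>i<k. \<not> overshadows r par w (T i) (T ((i + 1) mod k))"
  shows "\<not> compatible r par w (T ` {..<k})"
proof
  assume comp: "compatible r par w (T ` {..<k})"
  define d where "d = depth r par w"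
  have ovs: "overshadows r par w (T ((i + 1) mod k)) (T i)" if "i < k" for i
  proof -
    have "(i + 1) mod k < k" using assms(3) by simp
    then show ?thesis using comp that assms(5) unfolding compatible_def by blast
  qed
  have "\<forall>i<k. \<exists>x y. x \<in> T ((i + 1) mod k) - T i \<and> y \<in> T ((i + 1) mod k) \<inter> T i \<and> \<not> d y < d x"
    using assms(5) unfolding overshadows_def d_def by blast
  then obtain x y where xy: "\<And>i. i < k \<Longrightarrow> x i \<in> T ((i + 1) mod k) - T i \<and> y i \<in> T ((i + 1) mod k) \<inter> T i \<and> \<not> d (y i) < d (x i)"
    by metis
  define h where "h = Min ((\<lambda>i. d (y i)) ` {..<k})"
  have ne: "{..<k} \<noteq> {}" using assms(3) lessThan_empty_iff by (metis not_numeral_le_zero)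
  have "h \<in> (\<lambda>i. d (y i)) ` {..<k}" unfolding h_def using ne by (intro Min_in) auto
  then obtain j where j: "j < k" "d (y j) = h" by auto
  have hle: "h \<le> d (y i)" if "i < k" for i unfolding h_def using that by (intro Min_le) auto
  define S where "S i = {v \<in> T i. d v \<le> h}" for i
  have step: "\<forall>i<k. S i \<subseteq> S ((i + 1) mod k)"
  proof (intro allI impI subsetI)
    fix i v assume i: "i < k" and v: "v \<in> S i"
    have "v \<in> T ((i + 1) mod k)"
    proof (rule ccontr)
      assume "v \<notin> T ((i + 1) mod k)"
      then have "d (y i) < d v" using ovs[OF i] xy[OF i] v unfolding overshadows_def S_def d_def by blast
      then show False using hle[OF i] v unfolding S_def by simp
    qed
    then show "v \<in> S ((i + 1) mod k)" using v unfolding S_def by simp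
  qed
  have jk: "(j + 1) mod k < k" using j by simp
  have "S ((j + 1) mod k) \<subseteq> S (((j + 1) mod k + (k - 1)) mod k)"
    by (rule chain_mod[OF step jk])
  also have "((j + 1) mod k + (k - 1)) mod k = j"
  proof -
    have "((j + 1) mod k + (k - 1)) mod k = (j + 1 + (k - 1)) mod k" by (simp add: mod_add_left_eq)
    also have "j + 1 + (k - 1) = j + k" using j by simp
    finally show ?thesis using j by simp
  qed
  finally have sub: "S ((j + 1) mod k) \<subseteq> S j" .
  have "x j \<in> S ((j + 1) mod k)" using xy[OF j(1)] j(2) unfolding S_def by auto
  then show False using sub xy[OF j(1)] unfolding S_def by auto
qed

end
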